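(* Let $X$ be a connected, locally connected topological space and let $f\colon X\to[0,1]$ be a continuous surjection. Then $f$ is a quotient map, i.e. a subset $G\subseteq[0,1]$ is open in $[0,1]$ if and only if $f^{-1}(G)$ is open in $X$.
   Context: $[0,1]$ carries its usual Euclidean topology. *)

theory Defs
  imports "HOL-Analysis.Analysis"
begin

end

theory Submission
  imports Defs
begin

lemma left_side:
  fixes X :: "'a topology" and f :: "'a \<Rightarrow> real"
  assumes conn: "connected_space X"
    and lc: "locally_connected_space X"
    and cont: "continuous_map X euclideanreal f"
    and W: "openin X {x \<in> topspace X. f x \<in> U}"
    and yU: "y \<in> U" and yim: "y \<in> f ` topspace X"
    and h: "\<forall>e>0. \<exists>z\<in>f ` topspace X. y - e < z \<and> z \<le> y \<and> z \<notin> U"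
  shows False
proof -
  define Ws where "Ws = {x \<in> topspace X. f x \<in> U}"
  define V where "V = (\<Union>x0\<in>{x\<in>topspace X. f x = y}. connected_component_of_set (subtopology X Ws) x0)"
  have Vopen: "openin X V"
    unfolding V_def
  proof (rule openin_Union)
    fix S assume "S \<in> (\<lambda>x0. connected_component_of_set (subtopology X Ws) x0) ` {x\<in>topspace X. f x = y}"
    then obtain x0 where "x0 \<in> topspace X" "f x0 = y" and S: "S = connected_component_of_set (subtopology X Ws) x0" by blast
    then have "x0 \<in> Ws" using yU by (simp add: Ws_def)
    then show "openin X S"
      unfolding S using lc W locally_connected_B unfolding Ws_def by blast
  qed
  have Vge: "f x \<ge> y" if "x \<in> V" for x
  proof (rule ccontr)
    assume lt: "\<not> f x \<ge> y"
    from that obtain x0 where x0: "x0 \<in> topspace X" "f x0 = y"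
      and xK: "x \<in> connected_component_of_set (subtopology X Ws) x0"
      unfolding V_def by blast
    define K where "K = connected_component_of_set (subtopology X Ws) x0"
    have "connectedin (subtopology X Ws) K"
      unfolding K_def by (rule connectedin_connected_component_of)
    then have Kc: "connectedin X K" and KW: "K \<subseteq> Ws"
      by (auto simp: connectedin_subtopology)
    have "x0 \<in> Ws" using x0 yU by (simp add: Ws_def)
    then have "x0 \<in> K" unfolding K_def
      using x0 by (simp add: connected_component_of_refl Ws_def)
    have "connectedin euclideanreal (f ` K)"
      using connectedin_continuous_map_image[OF cont Kc] .
    then have cK: "connected (f ` K)" by simp
    have xK': "x \<in> K" using xK K_def by simp
    have "y - f x > 0" using lt by simp
    then obtain z where z: "z \<in> f ` topspace X" "y - (y - f x) < z" "z \<le> y" "z \<notin> U"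
      using h by blast
    have fxK: "f x \<in> f ` K" "f x0 \<in> f ` K" using xK' \<open>x0 \<in> K\<close> by auto
    have "f x \<le> z" "z \<le> f x0" using z(2,3) x0(2) by auto
    then have "z \<in> f ` K"
      using cK fxK unfolding connected_iff_interval by blast
    then show False using KW z(4) by (auto simp: Ws_def)
  qed
  have Vtop: "V \<subseteq> topspace X" using Vopen openin_subset by blast
  have yV: "x \<in> V" if "x \<in> topspace X" "f x = y" for x
  proof -
    have "x \<in> Ws" using that yU by (simp add: Ws_def)
    then have "x \<in> connected_component_of_set (subtopology X Ws) x"
      using that by (simp add: connected_component_of_refl Ws_def)
    then show ?thesis using that unfolding V_def by blast
  qed
  define A where "A = {x \<in> topspace X. f x \<in> {..<y}}"
  define B where "B = V \<union> {x \<in> topspace X. f x \<in> {y<..}}"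
  have Ao: "openin X A" unfolding A_def
    using openin_continuous_map_preimage[OF cont, of "{..<y}"] by simp
  have Bo: "openin X B" unfolding B_def
    using openin_continuous_map_preimage[OF cont, of "{y<..}"] Vopen by (simp add: openin_Un)
  have "A \<union> B = topspace X"
  proof
    show "A \<union> B \<subseteq> topspace X" using Vtop unfolding A_def B_def by auto
    show "topspace X \<subseteq> A \<union> B"
    proof
      fix x assume x: "x \<in> topspace X"
      show "x \<in> A \<union> B"
      proof (cases "f x < y")
        case True then show ?thesis using x by (simp add: A_def)
      next
        case False
        then have "f x = y \<or> f x > y" by auto
        then show ?thesis using x yV[of x] by (auto simp: B_def)
      qed
    qed
  qed
  moreover have "A \<inter> B = {}" using Vge unfolding A_def B_def by force
  moreover have "A \<noteq> {}"
  proof -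
    obtain z where z: "z \<in> f ` topspace X" "z \<le> y" "z \<notin> U" using h[rule_format, of 1] by auto
    then have "z < y" using yU by (cases "z = y") auto
    obtain x where "x \<in> topspace X" "f x = z" using z(1) by auto
    then show ?thesis using \<open>z < y\<close> unfolding A_def by auto
  qed
  moreover have "B \<noteq> {}" using yim yV unfolding B_def by blast
  ultimately show False using conn Ao Bo unfolding connected_space_eq by blast
qed

theorem mainTheorem2:
  fixes X :: "'a topology" and f :: "'a \<Rightarrow> real"
  assumes "connected_space X"
    and "locally_connected_space X"
    and "continuous_map X (top_of_set {0..1}) f"
    and "f ` topspace X = {0..1}"
  shows "quotient_map X (top_of_set {0..1}) f"
proof -
  have cont: "continuous_map X euclideanreal f"
    using assms(3) by (simp add: continuous_map_in_subtopology)
  have img: "f ` topspace X = topspace (top_of_set {0..1::real})" using assms(4) by simp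
  show ?thesis
    unfolding quotient_map_def
  proof (intro conjI allI impI iffI img)
    fix U :: "real set"
    assume "U \<subseteq> topspace (top_of_set {0..1})" "openin (top_of_set {0..1}) U"
    then show "openin X {x \<in> topspace X. f x \<in> U}"
      using assms(3) unfolding continuous_map_def by blast
  next
    fix U :: "real set"
    assume Usub: "U \<subseteq> topspace (top_of_set {0..1})" and Wo: "openin X {x \<in> topspace X. f x \<in> U}"
    have Us: "U \<subseteq> {0..1}" using Usub by simp
    show "openin (top_of_set {0..1}) U"
      unfolding openin_euclidean_subtopology_iff
    proof (intro conjI Us ballI)
      fix y assume yU: "y \<in> U"
      have yim: "y \<in> f ` topspace X" using yU Us assms(4) by auto
      obtain e1 where e1: "e1 > 0" "\<forall>z\<in>f ` topspace X. y - e1 < z \<and> z \<le> y \<longrightarrow> z \<in> U"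
        using left_side[OF assms(1,2) cont Wo yU yim] by force
      have cont2: "continuous_map X euclideanreal (\<lambda>x. - f x)"
        using cont by (simp add: continuous_map_minus)
      have W2: "openin X {x \<in> topspace X. - f x \<in> uminus ` U}"
        using Wo by (simp add: image_iff)
      have y2: "- y \<in> uminus ` U" using yU by simp
      have yim2: "- y \<in> (\<lambda>x. - f x) ` topspace X" using yim by auto
      obtain e2 where e2: "e2 > 0" "\<forall>z\<in>(\<lambda>x. - f x) ` topspace X. - y - e2 < z \<and> z \<le> - y \<longrightarrow> z \<in> uminus ` U"
        using left_side[OF assms(1,2) cont2 W2 y2 yim2] by force
      show "\<exists>e>0. \<forall>x'\<in>{0..1}. dist x' y < e \<longrightarrow> x' \<in> U"
      proof (intro exI[of _ "min e1 e2"] conjI ballI impI)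
        show "min e1 e2 > 0" using e1 e2 by simp
      next
        fix x' :: real assume x': "x' \<in> {0..1}" "dist x' y < min e1 e2"
        then have xim: "x' \<in> f ` topspace X" using assms(4) by simp
        show "x' \<in> U"
        proof (cases "x' \<le> y")
          case True then show ?thesis using e1 xim x' by (auto simp: dist_real_def)
        next
          case False
          have "- x' \<in> (\<lambda>x. - f x) ` topspace X" using xim by auto
          then have "- x' \<in> uminus ` U" using e2 False x' by (auto simp: dist_real_def)
          then show ?thesis by force
        qed
      qed
    qed
  qed
qed

end
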